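(* Let $G$ be a graph that has at least one pair of distinct twin vertices and at least one isolated vertex, and let $T$ be a minimum twin cover of $G$. Then for every $t\ge1$, \[\det(\mu_t(G))=t|T|+\det(G)+t-1.\]
   Context: All graphs are finite and simple. For a graph $G$ with $V(G)=\{v_1,\dots,v_n\}$ and an integer $t\ge1$, the generalized Mycielskian $\mu_t(G)$ has vertex set $\{u_i^s: 1\le i\le n,\ 0\le s\le t\}\cup\{w\}$, where $u_i^0$ is identified with $v_i$. Its edges are: $u_i^0u_j^0$ for each edge $v_iv_j$ of $G$; $u_i^su_j^{s+1}$ and $u_j^su_i^{s+1}$ for each edge $v_iv_j$ of $G$ and each $0\le s<t$; and $u_i^tw$ for all $1\le i\le n$. A set $S\subseteq V(G)$ is a determining set for $G$ if the only automorphism of $G$ fixing every vertex of $S$ is the identity; $\det(G)$ is the minimum size of a determining set. Two vertices are twins if they have the same open neighborhood. A minimum twin cover of a graph is a subset of its vertices of minimum size that contains at least one vertex from every pair of distinct twin vertices; equivalently, it contains all but one vertex of each class of mutually twin vertices. *)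

theory Defs
  imports Main
begin

definition simple_graph :: "'a set \<Rightarrow> ('a \<Rightarrow> 'a \<Rightarrow> bool) \<Rightarrow> bool" where
  "simple_graph V E \<longleftrightarrow> finite V \<and> (\<forall>x y. E x y \<longrightarrow> x \<in> V \<and> y \<in> V)
     \<and> (\<forall>x y. E x y \<longrightarrow> E y x) \<and> (\<forall>x. \<not> E x x)"

definition automorphism :: "'a set \<Rightarrow> ('a \<Rightarrow> 'a \<Rightarrow> bool) \<Rightarrow> ('a \<Rightarrow> 'a) \<Rightarrow> bool" where
  "automorphism V E f \<longleftrightarrow> bij_betw f V V \<and> (\<forall>x\<in>V. \<forall>y\<in>V. E x y \<longleftrightarrow> E (f x) (f y))"

definition determining_set :: "'a set \<Rightarrow> ('a \<Rightarrow> 'a \<Rightarrow> bool) \<Rightarrow> 'a set \<Rightarrow> bool" where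
  "determining_set V E S \<longleftrightarrow> S \<subseteq> V \<and>
     (\<forall>f. automorphism V E f \<and> (\<forall>x\<in>S. f x = x) \<longrightarrow> (\<forall>x\<in>V. f x = x))"

definition det_num :: "'a set \<Rightarrow> ('a \<Rightarrow> 'a \<Rightarrow> bool) \<Rightarrow> nat" where
  "det_num V E = (LEAST n. \<exists>S. determining_set V E S \<and> card S = n)"

definition open_nbhd :: "'a set \<Rightarrow> ('a \<Rightarrow> 'a \<Rightarrow> bool) \<Rightarrow> 'a \<Rightarrow> 'a set" where
  "open_nbhd V E x = {y \<in> V. E x y}"

definition twins :: "'a set \<Rightarrow> ('a \<Rightarrow> 'a \<Rightarrow> bool) \<Rightarrow> 'a \<Rightarrow> 'a \<Rightarrow> bool" where
  "twins V E x y \<longleftrightarrow> x \<in> V \<and> y \<in> V \<and> open_nbhd V E x = open_nbhd V E y"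

definition twin_cover :: "'a set \<Rightarrow> ('a \<Rightarrow> 'a \<Rightarrow> bool) \<Rightarrow> 'a set \<Rightarrow> bool" where
  "twin_cover V E T \<longleftrightarrow> T \<subseteq> V \<and>
     (\<forall>x y. twins V E x y \<and> x \<noteq> y \<longrightarrow> x \<in> T \<or> y \<in> T)"

definition min_twin_cover :: "'a set \<Rightarrow> ('a \<Rightarrow> 'a \<Rightarrow> bool) \<Rightarrow> 'a set \<Rightarrow> bool" where
  "min_twin_cover V E T \<longleftrightarrow> twin_cover V E T \<and>
     (\<forall>T'. twin_cover V E T' \<longrightarrow> card T \<le> card T')"

definition isolated :: "'a set \<Rightarrow> ('a \<Rightarrow> 'a \<Rightarrow> bool) \<Rightarrow> 'a \<Rightarrow> bool" where
  "isolated V E x \<longleftrightarrow> x \<in> V \<and> (\<forall>y\<in>V. \<not> E x y)"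

text \<open>Generalized Mycielskian: vertex Some (v, s) is u_v^s (0 \<le> s \<le> t, Some (v,0) = v), None is w.\<close>
definition myc_verts :: "'a set \<Rightarrow> nat \<Rightarrow> ('a \<times> nat) option set" where
  "myc_verts V t = {Some (v, s) | v s. v \<in> V \<and> s \<le> t} \<union> {None}"

fun myc_edge :: "('a \<Rightarrow> 'a \<Rightarrow> bool) \<Rightarrow> 'a set \<Rightarrow> nat \<Rightarrow> ('a \<times> nat) option \<Rightarrow> ('a \<times> nat) option \<Rightarrow> bool" where
  "myc_edge E V t (Some (x, s)) (Some (y, r)) \<longleftrightarrow>
     E x y \<and> s \<le> t \<and> r \<le> t \<and> ((s = 0 \<and> r = 0) \<or> r = s + 1 \<or> s = r + 1)"
| "myc_edge E V t (Some (x, s)) None \<longleftrightarrow> x \<in> V \<and> s = t"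
| "myc_edge E V t None (Some (y, r)) \<longleftrightarrow> y \<in> V \<and> r = t"
| "myc_edge E V t None None \<longleftrightarrow> False"

end

theory Submission
  imports Defs
begin



definition swp :: "'b \<Rightarrow> 'b \<Rightarrow> 'b \<Rightarrow> 'b" where
  "swp a b z = (if z = a then b else if z = b then a else z)"

lemma swap_aut:
  assumes sym: "\<forall>x y. A x y \<longrightarrow> A y x" and irr: "\<forall>x. \<not> A x x"
    and a: "a \<in> W" and b: "b \<in> W" and tw: "\<forall>z\<in>W. A a z \<longleftrightarrow> A b z"
  shows "automorphism W A (swp a b)"
proof -
  have inj: "inj_on (swp a b) W" unfolding inj_on_def swp_def by auto
  have img: "swp a b ` W = W"
  proof
    show "swp a b ` W \<subseteq> W" using a b by (auto simp: swp_def)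
    show "W \<subseteq> swp a b ` W"
    proof
      fix z assume "z \<in> W"
      have "swp a b (swp a b z) = z" by (auto simp: swp_def)
      moreover have "swp a b z \<in> W" using \<open>z \<in> W\<close> a b by (auto simp: swp_def)
      ultimately show "z \<in> swp a b ` W" by (metis image_eqI)
    qed
  qed
  have e: "A x y \<longleftrightarrow> A (swp a b x) (swp a b y)" if "x \<in> W" "y \<in> W" for x y
  proof -
    have tb: "\<forall>z\<in>W. A z a \<longleftrightarrow> A z b" using tw sym by blast
    have ab: "A a b \<longleftrightarrow> A b a" using sym by blast
    show ?thesis
    proof -
      have t1: "A a y = A b y" "A a x = A b x" "A x a = A x b" "A y a = A y b"
        using tw tb that by blast+
      have i: "\<not> A a a" "\<not> A b b" using irr by auto
      have s1: "swp a b a = b" and s2: "swp a b b = a" and s3: "z \<noteq> a \<Longrightarrow> z \<noteq> b \<Longrightarrow> swp a b z = z" for z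
        unfolding swp_def by auto
      show ?thesis
        apply (cases "x = a"; cases "x = b"; cases "y = a"; cases "y = b")
        using t1 ab i s1 s2 s3 by metis+
    qed
  qed
  show ?thesis unfolding automorphism_def bij_betw_def using inj img e by blast
qed

lemma det_twin:
  assumes "determining_set W A S" and sym: "\<forall>x y. A x y \<longrightarrow> A y x" and irr: "\<forall>x. \<not> A x x"
    and a: "a \<in> W" and b: "b \<in> W" and ab: "a \<noteq> b" and tw: "\<forall>z\<in>W. A a z \<longleftrightarrow> A b z"
  shows "a \<in> S \<or> b \<in> S"
proof (rule ccontr)
  assume n: "\<not> (a \<in> S \<or> b \<in> S)"
  have "automorphism W A (swp a b)" using swap_aut[OF sym irr a b tw] .
  moreover have "\<forall>x\<in>S. swp a b x = x" using n by (auto simp: swp_def)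
  ultimately have "\<forall>x\<in>W. swp a b x = x" using assms(1) unfolding determining_set_def by blast
  then show False using a ab by (auto simp: swp_def)
qed

lemma aut_edge: "automorphism W A f \<Longrightarrow> x \<in> W \<Longrightarrow> y \<in> W \<Longrightarrow> A x y \<longleftrightarrow> A (f x) (f y)"
  unfolding automorphism_def by blast

lemma aut_surj: "automorphism W A f \<Longrightarrow> y \<in> W \<Longrightarrow> \<exists>x\<in>W. f x = y"
  unfolding automorphism_def bij_betw_def by (metis imageE)

lemma aut_in: "automorphism W A f \<Longrightarrow> x \<in> W \<Longrightarrow> f x \<in> W"
  unfolding automorphism_def bij_betw_def by blast

lemma aut_inj: "automorphism W A f \<Longrightarrow> x \<in> W \<Longrightarrow> y \<in> W \<Longrightarrow> f x = f y \<Longrightarrow> x = y"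
  unfolding automorphism_def bij_betw_def inj_on_def by blast

lemma fix_last:
  assumes "inj_on f A" "f ` A \<subseteq> A" "\<forall>a\<in>A. a \<noteq> v \<longrightarrow> f a = a"
  shows "\<forall>a\<in>A. f a = a"
proof
  fix a assume a: "a \<in> A"
  show "f a = a"
  proof (rule ccontr)
    assume ne: "f a \<noteq> a"
    then have "a = v" using assms(3) a by blast
    have fa: "f a \<in> A" using assms(2) a by blast
    then have "f (f a) = f a" using assms(3) ne \<open>a = v\<close> by blast
    then have "f a = a" using assms(1) fa a unfolding inj_on_def by blast
    then show False using ne by blast
  qed
qed

lemma finite_inj_bij:
  assumes "finite A" "f ` A \<subseteq> A" "inj_on f A" shows "bij_betw f A A"
  unfolding bij_betw_def using assms endo_inj_surj by blast




lemma opt_cases: "u = None \<or> (\<exists>x s. u = Some (x, s))"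
  by (cases u) auto

locale mg =
  fixes V :: "'a set" and E :: "'a \<Rightarrow> 'a \<Rightarrow> bool" and t :: nat
  assumes sg: "simple_graph V E" and t1: "t \<ge> 1"
begin

abbreviation "W \<equiv> myc_verts V t"
abbreviation "M \<equiv> myc_edge E V t"

definition Vn :: "'a set" where "Vn = {x\<in>V. \<exists>y. E x y}"
definition Iso :: "'a set" where "Iso = {x\<in>V. \<forall>y. \<not> E x y}"

lemma finV: "finite V" using sg unfolding simple_graph_def by blast
lemma E_V: "E x y \<Longrightarrow> x \<in> V \<and> y \<in> V" using sg unfolding simple_graph_def by blast
lemma E_sym: "E x y \<Longrightarrow> E y x" using sg unfolding simple_graph_def by blast
lemma E_irr: "\<not> E x x" using sg unfolding simple_graph_def by blast

lemma W_Some[simp]: "Some (x, s) \<in> W \<longleftrightarrow> x \<in> V \<and> s \<le> t"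
  unfolding myc_verts_def by auto
lemma W_None[simp]: "None \<in> W"
  unfolding myc_verts_def by auto

lemma W_eq: "W = (\<lambda>p. Some p) ` (V \<times> {..t}) \<union> {None}"
  unfolding myc_verts_def by auto

lemma finW: "finite W" unfolding W_eq using finV by auto

lemma VnI_disj: "x \<in> V \<Longrightarrow> x \<in> Vn \<or> x \<in> Iso" unfolding Vn_def Iso_def by auto
lemma Vn_Iso: "x \<in> Vn \<Longrightarrow> x \<notin> Iso" unfolding Vn_def Iso_def by auto
lemma Iso_noE: "x \<in> Iso \<Longrightarrow> \<not> E x y \<and> \<not> E y x" unfolding Iso_def using E_sym by blast
lemma isolated_Iso: "isolated V E x \<longleftrightarrow> x \<in> Iso"
  unfolding isolated_def Iso_def using E_V by blast
lemma twins_iff: "twins V E x y \<longleftrightarrow> x \<in> V \<and> y \<in> V \<and> (\<forall>z. E x z \<longleftrightarrow> E y z)"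
  unfolding twins_def open_nbhd_def using E_V by blast

lemma opt2_cases:
  obtains "u = None" "v = None" | x s where "u = Some (x, s)" "v = None"
  | y r where "u = None" "v = Some (y, r)" | x s y r where "u = Some (x, s)" "v = Some (y, r)"
  using opt_cases[of u] opt_cases[of v] by metis

lemma M_sym: assumes "M u v" shows "M v u"
  using assms by (cases u v rule: opt2_cases) (auto dest: E_sym)

lemma M_irr: "\<not> M u u"
proof (cases u)
  case (Some p) then show ?thesis using E_irr by (cases p) simp
qed simp

lemma M_symall: "\<forall>x y. M x y \<longrightarrow> M y x" using M_sym by blast
lemma M_irrall: "\<forall>x. \<not> M x x" using M_irr by blast

lemma tw_lift:
  assumes "x \<in> V" "y \<in> V" "\<forall>z. E x z \<longleftrightarrow> E y z"
  shows "M (Some (x, s)) v \<longleftrightarrow> M (Some (y, s)) v"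
proof (cases v)
  case None then show ?thesis using assms by simp
next
  case (Some p) then show ?thesis using assms by (cases p) simp
qed

lemma J_noedge: "x \<in> Iso \<Longrightarrow> s < t \<Longrightarrow> \<not> M (Some (x, s)) v"
proof (cases v)
  case None then show "x \<in> Iso \<Longrightarrow> s < t \<Longrightarrow> \<not> M (Some (x, s)) v" by simp
next
  case (Some p) then show "x \<in> Iso \<Longrightarrow> s < t \<Longrightarrow> \<not> M (Some (x, s)) v" using Iso_noE by (cases p) simp
qed

lemma P_edge: "x \<in> Iso \<Longrightarrow> M (Some (x, t)) v \<longleftrightarrow> v = None"
proof (cases v)
  case None then show "x \<in> Iso \<Longrightarrow> M (Some (x, t)) v \<longleftrightarrow> v = None" unfolding Iso_def by simp
next
  case (Some p) then show "x \<in> Iso \<Longrightarrow> M (Some (x, t)) v \<longleftrightarrow> v = None" using Iso_noE by (cases p) simp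
qed

definition Bset :: "nat \<Rightarrow> ('a \<times> nat) option set" where
  "Bset j = {None} \<union> {Some (x, s) | x s. x \<in> V \<and> s \<le> t \<and> t < s + j \<and> (x \<in> Vn \<or> s = t)}"

lemma B_W: "Bset j \<subseteq> W" unfolding Bset_def by auto

lemma B_step: "Bset (Suc j) = Bset j \<union> {v\<in>W. \<exists>u\<in>Bset j. M u v}"
proof
  show "Bset (Suc j) \<subseteq> Bset j \<union> {v\<in>W. \<exists>u\<in>Bset j. M u v}"
  proof
    fix v assume v: "v \<in> Bset (Suc j)"
    show "v \<in> Bset j \<union> {v\<in>W. \<exists>u\<in>Bset j. M u v}"
    proof (cases "v \<in> Bset j")
      case True then show ?thesis by blast
    next
      case False
      have "v \<noteq> None" using False unfolding Bset_def by auto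
      then obtain x s where vs0: "v = Some (x, s)" using opt_cases[of v] by auto
      have c: "x \<in> V" "s \<le> t" "t < s + Suc j" "x \<in> Vn \<or> s = t"
        using v unfolding vs0 Bset_def by auto
      have "\<not> t < s + j" using False c unfolding vs0 Bset_def by auto
      then have vs: "v = Some (x, s)" "x \<in> V" "s \<le> t" "s + j = t" "x \<in> Vn \<or> s = t"
        using c vs0 by auto
      show ?thesis
      proof (cases "s = t")
        case True
        have "None \<in> Bset j" unfolding Bset_def by auto
        moreover have "M None v" using vs True by auto
        moreover have "v \<in> W" using vs by simp
        ultimately show ?thesis by blast
      next
        case False
        then have "x \<in> Vn" "s < t" using vs by auto
        then obtain y where y: "E x y" unfolding Vn_def by auto
        then have yV: "y \<in> V" "x \<in> V" using E_V by auto
        have "y \<in> Vn" using E_sym[OF y] yV unfolding Vn_def by auto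
        then have "Some (y, s + 1) \<in> Bset j" unfolding Bset_def using yV \<open>s < t\<close> vs by auto
        moreover have "M (Some (y, s + 1)) v" using vs E_sym[OF y] \<open>s < t\<close> by auto
        moreover have "v \<in> W" using vs by simp
        ultimately show ?thesis by blast
      qed
    qed
  qed
next
  show "Bset j \<union> {v\<in>W. \<exists>u\<in>Bset j. M u v} \<subseteq> Bset (Suc j)"
  proof
    fix v assume v: "v \<in> Bset j \<union> {v\<in>W. \<exists>u\<in>Bset j. M u v}"
    show "v \<in> Bset (Suc j)"
    proof (cases "v \<in> Bset j")
      case True then show ?thesis unfolding Bset_def by auto
    next
      case False
      then obtain u where u: "u \<in> Bset j" "M u v" "v \<in> W" using v by blast
      show ?thesis
      proof (cases "u = None")
        case True
        have "v \<noteq> None" using u True M_irr by metis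
        then obtain x r where "v = Some (x, r)" using opt_cases[of v] by auto
        then have "v = Some (x, t)" "x \<in> V" using u True by auto
        then show ?thesis unfolding Bset_def by auto
      next
        case False
        then obtain x s where us: "u = Some (x, s)" "x \<in> V" "s \<le> t" "t < s + j"
          using u(1) unfolding Bset_def by auto
        show ?thesis
        proof (cases "v = None")
          case True then show ?thesis unfolding Bset_def by auto
        next
          case False
          then obtain y r where vr: "v = Some (y, r)" using opt_cases[of v] by auto
          have e: "E x y" "r \<le> t" "(s = 0 \<and> r = 0) \<or> r = s + 1 \<or> s = r + 1" using u(2) us vr by auto
          have "y \<in> Vn" using E_sym[OF e(1)] E_V[OF e(1)] unfolding Vn_def by auto
          moreover have "t < r + Suc j" using e us by auto
          moreover have "y \<in> V" using E_V[OF e(1)] by blast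
          ultimately show ?thesis using vr e(2) unfolding Bset_def by auto
        qed
      qed
    qed
  qed
qed

lemma B_inv:
  assumes f: "automorphism W M f" and fN: "f None = None"
  shows "v \<in> W \<Longrightarrow> f v \<in> Bset j \<longleftrightarrow> v \<in> Bset j"
proof (induction j arbitrary: v)
  case 0
  have b0: "Bset 0 = {None}" unfolding Bset_def by auto
  have "f v = None \<longleftrightarrow> v = None" using aut_inj[OF f 0 W_None] fN by auto
  then show ?case using b0 by auto
next
  case (Suc j)
  have fv: "f v \<in> W" using aut_in[OF f Suc.prems] .
  have "(\<exists>u\<in>Bset j. M u (f v)) \<longleftrightarrow> (\<exists>u\<in>Bset j. M u v)"
  proof
    assume "\<exists>u\<in>Bset j. M u (f v)"
    then obtain u where u: "u \<in> Bset j" "M u (f v)" by blast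
    have uW: "u \<in> W" using u B_W by blast
    obtain u' where u': "u' \<in> W" "f u' = u" using aut_surj[OF f uW] by blast
    have "u' \<in> Bset j" using Suc.IH[OF u'(1)] u' u by simp
    moreover have "M u' v" using aut_edge[OF f u'(1) Suc.prems] u' u by simp
    ultimately show "\<exists>u\<in>Bset j. M u v" by blast
  next
    assume "\<exists>u\<in>Bset j. M u v"
    then obtain u where u: "u \<in> Bset j" "M u v" by blast
    have uW: "u \<in> W" using u B_W by blast
    have "f u \<in> Bset j" using Suc.IH[OF uW] u by simp
    moreover have "M (f u) (f v)" using aut_edge[OF f uW Suc.prems] u by simp
    ultimately show "\<exists>u\<in>Bset j. M u (f v)" by blast
  qed
  then show ?case unfolding B_step using Suc.IH[OF Suc.prems] fv Suc.prems by blast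
qed

lemma level:
  assumes f: "automorphism W M f" and fN: "f None = None"
    and x: "x \<in> V" "s \<le> t" "x \<in> Vn \<or> s = t"
  shows "\<exists>y. f (Some (x, s)) = Some (y, s) \<and> y \<in> V \<and> (y \<in> Vn \<or> s = t)"
proof -
  have vW: "Some (x, s) \<in> W" using x by simp
  have in1: "Some (x, s) \<in> Bset (t - s + 1)" unfolding Bset_def using x by auto
  have in2: "Some (x, s) \<notin> Bset (t - s)" unfolding Bset_def using x by auto
  have a: "f (Some (x, s)) \<in> Bset (t - s + 1)" using B_inv[OF f fN vW] in1 by blast
  have b: "f (Some (x, s)) \<notin> Bset (t - s)" using B_inv[OF f fN vW] in2 by blast
  have "None \<in> Bset (t - s)" unfolding Bset_def by auto
  then obtain y r where yr: "f (Some (x, s)) = Some (y, r)" "y \<in> V" "r \<le> t" "t < r + (t - s + 1)"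
     "y \<in> Vn \<or> r = t" using a b unfolding Bset_def by auto
  have "\<not> (t < r + (t - s))" using b yr unfolding Bset_def by auto
  then have "r = s" using yr x by auto
  then show ?thesis using yr by auto
qed

definition has1 where "has1 v \<longleftrightarrow> (\<exists>u\<in>W. M v u)"
definition has2 where "has2 v \<longleftrightarrow> (\<exists>u1\<in>W. \<exists>u2\<in>W. u1 \<noteq> u2 \<and> M v u1 \<and> M v u2)"

lemma has2I: "u1 \<in> W \<Longrightarrow> u2 \<in> W \<Longrightarrow> u1 \<noteq> u2 \<Longrightarrow> M v u1 \<Longrightarrow> M v u2 \<Longrightarrow> has2 v"
  unfolding has2_def by blast
lemma has1I: "u \<in> W \<Longrightarrow> M v u \<Longrightarrow> has1 v"
  unfolding has1_def by blast

lemma has_inv: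
  assumes f: "automorphism W M f" and v: "v \<in> W"
  shows "has1 (f v) \<longleftrightarrow> has1 v" "has2 (f v) \<longleftrightarrow> has2 v"
proof -
  show "has1 (f v) \<longleftrightarrow> has1 v"
    unfolding has1_def using aut_surj[OF f] aut_edge[OF f] aut_in[OF f] v by metis
  show "has2 (f v) \<longleftrightarrow> has2 v"
  proof
    assume "has2 (f v)"
    then obtain u1 u2 where u: "u1 \<in> W" "u2 \<in> W" "u1 \<noteq> u2" "M (f v) u1" "M (f v) u2"
      unfolding has2_def by blast
    obtain u1' u2' where "u1' \<in> W" "u2' \<in> W" "f u1' = u1" "f u2' = u2"
      using aut_surj[OF f u(1)] aut_surj[OF f u(2)] by blast
    then show "has2 v" unfolding has2_def using u aut_edge[OF f] v by (metis (no_types, lifting))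
  next
    assume "has2 v"
    then obtain u1 u2 where u: "u1 \<in> W" "u2 \<in> W" "u1 \<noteq> u2" "M v u1" "M v u2"
      unfolding has2_def by blast
    have "f u1 \<in> W" "f u2 \<in> W" "f u1 \<noteq> f u2" "M (f v) (f u1)" "M (f v) (f u2)"
      using u aut_edge[OF f] aut_in[OF f] aut_inj[OF f] v by blast+
    then show "has2 (f v)" unfolding has2_def by blast
  qed
qed

lemma char_J:
  assumes ab: "a \<in> V" and v: "v \<in> W"
  shows "\<not> has1 v \<longleftrightarrow> (\<exists>x s. v = Some (x, s) \<and> x \<in> Iso \<and> s < t)"
proof (cases "v = None")
  case True
  have "M v (Some (a, t))" using True ab by simp
  moreover have "Some (a, t) \<in> W" using ab by simp
  ultimately show ?thesis unfolding has1_def using True by blast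
next
  case False
  then obtain x s where vs: "v = Some (x, s)" using opt_cases[of v] by auto
  have xs: "x \<in> V" "s \<le> t" using v vs by auto
  show ?thesis
  proof (cases "x \<in> Iso")
    case True
    show ?thesis
    proof (cases "s < t")
      case True
      then show ?thesis using J_noedge[OF \<open>x \<in> Iso\<close> True] vs \<open>x \<in> Iso\<close> unfolding has1_def by blast
    next
      case False
      then have "s = t" using xs by auto
      then have "M v None" using vs xs by simp
      then have "has1 v" unfolding has1_def using W_None by blast
      then show ?thesis using vs False by auto
    qed
  next
    case False
    then have "x \<in> Vn" using VnI_disj xs by blast
    then obtain y where y: "E x y" unfolding Vn_def by auto
    have yV: "y \<in> V" using E_V[OF y] by blast
    have "has1 v"
    proof (cases "s < t")
      case True
      then have "M v (Some (y, s + 1))" "Some (y, s+1) \<in> W" using vs y yV by auto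
      then show ?thesis unfolding has1_def by blast
    next
      case False
      then have "M v None" using vs xs by simp
      then show ?thesis unfolding has1_def using W_None by blast
    qed
    then show ?thesis using vs False by auto
  qed
qed

lemma char_P:
  assumes ab: "a \<in> V" "b \<in> V" "a \<noteq> b" and v: "v \<in> W"
  shows "(has1 v \<and> \<not> has2 v) \<longleftrightarrow> (\<exists>x. v = Some (x, t) \<and> x \<in> Iso)"
proof
  assume "\<exists>x. v = Some (x, t) \<and> x \<in> Iso"
  then obtain x where x: "v = Some (x, t)" "x \<in> Iso" by blast
  have xV: "x \<in> V" using x unfolding Iso_def by blast
  have "M v None" using x xV by simp
  then have "has1 v" unfolding has1_def using W_None by blast
  moreover have "\<not> has2 v"
  proof
    assume "has2 v"
    then obtain u1 u2 where "u1 \<noteq> u2" "M v u1" "M v u2" unfolding has2_def by blast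
    then show False using P_edge[OF x(2)] x(1) by metis
  qed
  ultimately show "has1 v \<and> \<not> has2 v" by blast
next
  assume h: "has1 v \<and> \<not> has2 v"
  show "\<exists>x. v = Some (x, t) \<and> x \<in> Iso"
  proof (cases "v = None")
    case True
    have "M v (Some (a, t))" "M v (Some (b, t))" "Some (a, t) \<in> W" "Some (b, t) \<in> W"
         "Some (a, t) \<noteq> Some (b, t)"
      using True ab by auto
    then have "has2 v" by (meson has2I)
    then show ?thesis using h by blast
  next
    case False
    then obtain x s where vs: "v = Some (x, s)" using opt_cases[of v] by auto
    have xs: "x \<in> V" "s \<le> t" using v vs by auto
    show ?thesis
    proof (cases "x \<in> Iso")
      case True
      have "\<not> s < t" using J_noedge[OF True] h vs unfolding has1_def by blast
      then show ?thesis using xs vs True by auto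
    next
      case False
      then have "x \<in> Vn" using VnI_disj xs by blast
      then obtain y where y: "E x y" unfolding Vn_def by auto
      have yV: "y \<in> V" using E_V[OF y] by blast
      have "has2 v"
      proof (cases "s = 0")
        case True
        then have "M v (Some (y, 0))" "M v (Some (y, 1))" "Some (y, 0) \<in> W" "Some (y, 1) \<in> W"
          "Some (y, 0::nat) \<noteq> Some (y, 1)" using vs y yV t1 by auto
        then show ?thesis by (meson has2I)
      next
        case False
        show ?thesis
        proof (cases "s < t")
          case True
          then have "M v (Some (y, s - 1))" "M v (Some (y, s + 1))" "Some (y, s - 1) \<in> W" "Some (y, s + 1) \<in> W"
            "Some (y, s - 1) \<noteq> Some (y, s + 1)" using vs y yV False by auto
          then show ?thesis by (meson has2I)
        next
          case True2: False
          then have "M v (Some (y, s - 1))" "M v None" "Some (y, s - 1) \<in> W" "None \<in> W"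
            "Some (y, s - 1) \<noteq> None" using vs y yV False xs by auto
          then show ?thesis by (meson has2I)
        qed
      qed
      then show ?thesis using h by blast
    qed
  qed
qed

end



context mg
begin

definition Sup :: "'a set \<Rightarrow> 'a set \<Rightarrow> 'a \<Rightarrow> ('a \<times> nat) option set" where
  "Sup D T i0 = (\<lambda>x. Some (x, 0)) ` D \<union> (\<lambda>p. Some p) ` (T \<times> {1..t}) \<union> (\<lambda>s. Some (i0, s)) ` {1..<t}"

lemma iso_twins: "x \<in> Iso \<Longrightarrow> y \<in> Iso \<Longrightarrow> twins V E x y"
  unfolding twins_iff Iso_def by auto

lemma E_Vn: "E x y \<Longrightarrow> x \<in> Vn \<and> y \<in> Vn"
  unfolding Vn_def using E_V E_sym by blast

lemma upper_det:
  assumes tc: "twin_cover V E T" and i0: "i0 \<in> Iso" "i0 \<notin> T"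
   and ab: "a \<in> V" "b \<in> V" "a \<noteq> b"
   and D: "determining_set V E D"
  shows "determining_set W M (Sup D T i0)"
proof -
  have TV: "T \<subseteq> V" using tc unfolding twin_cover_def by blast
  have DV: "D \<subseteq> V" using D unfolding determining_set_def by blast
  have i0V: "i0 \<in> V" using i0 unfolding Iso_def by blast
  have SW: "Sup D T i0 \<subseteq> W" unfolding Sup_def using TV DV i0V by auto
  have Esym: "\<forall>x y. E x y \<longrightarrow> E y x" and Eirr: "\<forall>x. \<not> E x x" using E_sym E_irr by blast+
  { fix f assume f: "automorphism W M f" and fS: "\<forall>x\<in>Sup D T i0. f x = x"
    have injf: "inj_on f W" using f unfolding automorphism_def bij_betw_def by blast
    have v0W: "Some (i0, t) \<in> W" using i0V by simp
    have "has1 (Some (i0, t)) \<and> \<not> has2 (Some (i0, t))" using char_P[OF ab v0W] i0 by blast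
    then have "has1 (f (Some (i0, t))) \<and> \<not> has2 (f (Some (i0, t)))" using has_inv[OF f v0W] by blast
    then obtain i' where i': "f (Some (i0, t)) = Some (i', t)" "i' \<in> Iso"
      using char_P[OF ab aut_in[OF f v0W]] by blast
    have "M (Some (i0, t)) None" using i0V by simp
    then have "M (f (Some (i0, t))) (f None)" using aut_edge[OF f v0W W_None] by blast
    then have fN: "f None = None" using P_edge[OF i'(2)] i'(1) by simp
    define P where "P = {v. \<exists>x. v = Some (x, t) \<and> x \<in> Iso}"
    have PW: "P \<subseteq> W" unfolding P_def Iso_def by auto
    have fP: "f ` P \<subseteq> P"
    proof
      fix u assume "u \<in> f ` P"
      then obtain v where v: "v \<in> P" "u = f v" by blast
      have vW: "v \<in> W" using v PW by blast
      have "has1 v \<and> \<not> has2 v" using char_P[OF ab vW] v unfolding P_def by blast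
      then have "has1 (f v) \<and> \<not> has2 (f v)" using has_inv[OF f vW] by blast
      then show "u \<in> P" using char_P[OF ab aut_in[OF f vW]] v unfolding P_def by blast
    qed
    have Pfix0: "\<forall>u\<in>P. u \<noteq> Some (i0, t) \<longrightarrow> f u = u"
    proof (intro ballI impI)
      fix u assume u: "u \<in> P" "u \<noteq> Some (i0, t)"
      then obtain x where x: "u = Some (x, t)" "x \<in> Iso" unfolding P_def by blast
      have "x \<noteq> i0" using u x by blast
      then have "x \<in> T" using tc iso_twins[OF x(2) i0(1)] i0(2) unfolding twin_cover_def by blast
      then have "u \<in> Sup D T i0" unfolding Sup_def using x t1 by auto
      then show "f u = u" using fS by blast
    qed
    have Pfix: "\<forall>u\<in>P. f u = u"
      using fix_last[OF inj_on_subset[OF injf PW] fP Pfix0] .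
    define J where "J = {v. \<exists>x s. v = Some (x, s) \<and> x \<in> Iso \<and> s < t}"
    have JW: "J \<subseteq> W" unfolding J_def Iso_def by auto
    have fJ: "f ` J \<subseteq> J"
    proof
      fix u assume "u \<in> f ` J"
      then obtain v where v: "v \<in> J" "u = f v" by blast
      have vW: "v \<in> W" using v JW by blast
      have "\<not> has1 v" using char_J[OF ab(1) vW] v unfolding J_def by blast
      then have "\<not> has1 (f v)" using has_inv[OF f vW] by blast
      then show "u \<in> J" using char_J[OF ab(1) aut_in[OF f vW]] v unfolding J_def by blast
    qed
    define v1 where "v1 = (if \<exists>j. j \<in> Iso \<and> j \<notin> D then Some (SOME j. j \<in> Iso \<and> j \<notin> D, 0::nat) else None)"
    have Jfix0: "\<forall>u\<in>J. u \<noteq> v1 \<longrightarrow> f u = u"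
    proof (intro ballI impI)
      fix u assume u: "u \<in> J" "u \<noteq> v1"
      then obtain x s where x: "u = Some (x, s)" "x \<in> Iso" "s < t" unfolding J_def by blast
      have "u \<in> Sup D T i0"
      proof (cases "s = 0")
        case True
        have "x \<in> D"
        proof (rule ccontr)
          assume xD: "x \<notin> D"
          then have ex: "\<exists>j. j \<in> Iso \<and> j \<notin> D" using x by blast
          define j where "j = (SOME j. j \<in> Iso \<and> j \<notin> D)"
          have j: "j \<in> Iso" "j \<notin> D" using someI_ex[OF ex] unfolding j_def by blast+
          have "v1 = Some (j, 0)" unfolding v1_def j_def using ex by simp
          then have xj: "x \<noteq> j" using u x True by blast
          have "x \<in> V" "j \<in> V" using x j unfolding Iso_def by blast+
          moreover have "\<forall>z\<in>V. E x z \<longleftrightarrow> E j z" using x j Iso_noE by blast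
          ultimately have "x \<in> D \<or> j \<in> D" using det_twin[OF D Esym Eirr _ _ xj] by blast
          then show False using xD j by blast
        qed
        then show ?thesis unfolding Sup_def using x True by auto
      next
        case False
        show ?thesis
        proof (cases "x = i0")
          case True
          then show ?thesis unfolding Sup_def using x False by auto
        next
          case False2: False
          then have "x \<in> T" using tc iso_twins[OF x(2) i0(1)] i0(2) unfolding twin_cover_def by blast
          then show ?thesis unfolding Sup_def using x False by auto
        qed
      qed
      then show "f u = u" using fS by blast
    qed
    have Jfix: "\<forall>u\<in>J. f u = u"
      using fix_last[OF inj_on_subset[OF injf JW] fJ Jfix0] .
    have lev0: "\<exists>y. f (Some (x, 0)) = Some (y, 0) \<and> y \<in> V \<and> y \<in> Vn" if "x \<in> Vn" for x
    proof -
      have "x \<in> V" using that unfolding Vn_def by blast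
      then show ?thesis using level[OF f fN, of x 0] that t1 by auto
    qed
    define \<phi> where "\<phi> x = (if x \<in> Vn then fst (the (f (Some (x, 0)))) else x)" for x
    have phi_Vn: "f (Some (x, 0)) = Some (\<phi> x, 0) \<and> \<phi> x \<in> Vn" if "x \<in> Vn" for x
      using lev0[OF that] that unfolding \<phi>_def by auto
    have phi_Iso: "\<phi> x = x" if "x \<notin> Vn" for x using that unfolding \<phi>_def by simp
    have phiV: "\<phi> x \<in> V" if "x \<in> V" for x
    proof (cases "x \<in> Vn")
      case True then show ?thesis using phi_Vn[OF True] unfolding Vn_def by blast
    next
      case False then show ?thesis using phi_Iso[OF False] that by simp
    qed
    have inj_phi: "inj_on \<phi> V"
    proof (rule inj_onI)
      fix x y assume xy: "x \<in> V" "y \<in> V" "\<phi> x = \<phi> y"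
      show "x = y"
      proof (cases "x \<in> Vn"; cases "y \<in> Vn")
        assume "x \<in> Vn" "y \<in> Vn"
        then have "f (Some (x, 0)) = f (Some (y, 0))" using phi_Vn xy by simp
        moreover have "Some (x, 0::nat) \<in> W" "Some (y, 0::nat) \<in> W" using xy by auto
        ultimately have "Some (x, 0::nat) = Some (y, 0)" using aut_inj[OF f] by blast
        then show "x = y" by simp
      next
        assume "x \<in> Vn" "y \<notin> Vn"
        then show "x = y" using phi_Vn[of x] phi_Iso[of y] xy by auto
      next
        assume "x \<notin> Vn" "y \<in> Vn"
        then show "x = y" using phi_Vn[of y] phi_Iso[of x] xy by auto
      next
        assume "x \<notin> Vn" "y \<notin> Vn"
        then show "x = y" using phi_Iso xy by auto
      qed
    qed
    have aut_phi: "automorphism V E \<phi>"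
      unfolding automorphism_def
    proof
      show "bij_betw \<phi> V V" using finite_inj_bij[OF finV _ inj_phi] phiV by blast
      show "\<forall>x\<in>V. \<forall>y\<in>V. E x y = E (\<phi> x) (\<phi> y)"
      proof (intro ballI)
        fix x y assume xy: "x \<in> V" "y \<in> V"
        show "E x y = E (\<phi> x) (\<phi> y)"
        proof (cases "x \<in> Vn \<and> y \<in> Vn")
          case True
          have "M (Some (x, 0)) (Some (y, 0)) \<longleftrightarrow> M (f (Some (x, 0))) (f (Some (y, 0)))"
            using aut_edge[OF f, of "Some (x, 0)" "Some (y, 0)"] xy by simp
          then show ?thesis using phi_Vn True by simp
        next
          case False
          then have "x \<notin> Vn \<or> y \<notin> Vn" by blast
          then show ?thesis using phi_Iso E_Vn by metis
        qed
      qed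
    qed
    have phiD: "\<forall>x\<in>D. \<phi> x = x"
    proof
      fix x assume x: "x \<in> D"
      show "\<phi> x = x"
      proof (cases "x \<in> Vn")
        case True
        have "Some (x, 0) \<in> Sup D T i0" unfolding Sup_def using x by auto
        then have "f (Some (x, 0)) = Some (x, 0)" using fS by blast
        then show ?thesis using phi_Vn[OF True] by simp
      qed (simp add: phi_Iso)
    qed
    have phi_id: "\<forall>x\<in>V. \<phi> x = x" using D aut_phi phiD unfolding determining_set_def by blast
    have L0: "\<forall>x\<in>Vn. f (Some (x, 0)) = Some (x, 0)"
      using phi_id phi_Vn unfolding Vn_def by auto
    have Ls: "s \<le> t \<Longrightarrow> \<forall>y\<in>Vn. f (Some (y, s)) = Some (y, s)" for s
    proof (induction s)
      case 0 then show ?case using L0 by blast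
    next
      case (Suc s)
      have IH: "\<forall>y\<in>Vn. f (Some (y, s)) = Some (y, s)" using Suc by simp
      show ?case
      proof
        fix y assume y: "y \<in> Vn"
        have yV: "y \<in> V" using y unfolding Vn_def by blast
        obtain z where z: "f (Some (y, Suc s)) = Some (z, Suc s)" "z \<in> V"
          using level[OF f fN yV Suc.prems] y by blast
        have ywW: "Some (y, Suc s) \<in> W" using yV Suc.prems by simp
        have tw: "\<forall>u. E y u \<longleftrightarrow> E z u"
        proof
          fix u
          show "E y u \<longleftrightarrow> E z u"
          proof (cases "u \<in> Vn")
            case True
            have uV: "u \<in> V" using True unfolding Vn_def by blast
            have uW: "Some (u, s) \<in> W" using uV Suc.prems by simp
            have "E u y \<longleftrightarrow> M (Some (u, s)) (Some (y, Suc s))" using Suc.prems by simp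
            also have "\<dots> \<longleftrightarrow> M (f (Some (u, s))) (f (Some (y, Suc s)))" using aut_edge[OF f uW ywW] .
            also have "\<dots> \<longleftrightarrow> M (Some (u, s)) (Some (z, Suc s))" using IH True z by simp
            also have "\<dots> \<longleftrightarrow> E u z" using Suc.prems by simp
            finally show ?thesis using E_sym by blast
          next
            case False
            then show ?thesis using E_Vn E_sym by blast
          qed
        qed
        show "f (Some (y, Suc s)) = Some (y, Suc s)"
        proof (rule ccontr)
          assume ne: "f (Some (y, Suc s)) \<noteq> Some (y, Suc s)"
          then have yz: "y \<noteq> z" using z by blast
          have "twins V E y z" using twins_iff yV z tw by blast
          then have "y \<in> T \<or> z \<in> T" using tc yz unfolding twin_cover_def by blast
          then show False
          proof
            assume "y \<in> T"
            then have "Some (y, Suc s) \<in> Sup D T i0" unfolding Sup_def using Suc.prems by auto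
            then show False using fS ne by blast
          next
            assume zT: "z \<in> T"
            then have "Some (z, Suc s) \<in> Sup D T i0" unfolding Sup_def using Suc.prems by auto
            then have fz: "f (Some (z, Suc s)) = Some (z, Suc s)" using fS by blast
            have "Some (z, Suc s) \<in> W" using z Suc.prems by simp
            then have "Some (y, Suc s) = Some (z, Suc s)" using aut_inj[OF f ywW] fz z by metis
            then show False using yz by simp
          qed
        qed
      qed
    qed
    have "\<forall>v\<in>W. f v = v"
    proof
      fix v assume vW: "v \<in> W"
      show "f v = v"
      proof (cases "v = None")
        case True then show ?thesis using fN by simp
      next
        case False
        then obtain x s where vs: "v = Some (x, s)" using opt_cases[of v] by blast
        have xs: "x \<in> V" "s \<le> t" using vW vs by auto
        show ?thesis
        proof (cases "x \<in> Vn")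
          case True then show ?thesis using Ls[OF xs(2)] vs by blast
        next
          case False
          then have xI: "x \<in> Iso" using VnI_disj xs by blast
          show ?thesis
          proof (cases "s < t")
            case True
            then have "v \<in> J" unfolding J_def using vs xI by blast
            then show ?thesis using Jfix by blast
          next
            case False
            then have "v \<in> P" unfolding P_def using vs xI xs by auto
            then show ?thesis using Pfix by blast
          qed
        qed
      qed
    qed
  }
  then show ?thesis unfolding determining_set_def using SW by blast
qed

end



context mg
begin

definition NT :: "'a set" where "NT = {x\<in>Vn. \<exists>y. y \<noteq> x \<and> twins V E x y}"

definition Qset :: "('a \<times> nat) option set \<Rightarrow> 'a \<Rightarrow> 'a set" where
  "Qset S i = {x\<in>Vn. Some (x, 0) \<in> S} \<union> {x \<in> Vn - NT. \<exists>s. 1 \<le> s \<and> s \<le> t \<and> Some (x, s) \<in> S} \<union> (Iso - {i})"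

lemma aut_surjV: "automorphism V E \<phi> \<Longrightarrow> y \<in> V \<Longrightarrow> \<exists>x\<in>V. \<phi> x = y"
  by (rule aut_surj)

lemma lower_Q:
  assumes S: "determining_set W M S" and i: "i \<in> Iso"
  shows "determining_set V E (Qset S i)"
proof -
  have QV: "Qset S i \<subseteq> V" unfolding Qset_def Vn_def Iso_def by auto
  have SW: "S \<subseteq> W" using S unfolding determining_set_def by blast
  { fix \<phi> assume phi: "automorphism V E \<phi>" and fQ: "\<forall>x\<in>Qset S i. \<phi> x = x"
    have phiV: "\<phi> x \<in> V" if "x \<in> V" for x using aut_in[OF phi that] .
    have phiE: "E x y \<longleftrightarrow> E (\<phi> x) (\<phi> y)" if "x \<in> V" "y \<in> V" for x y using aut_edge[OF phi that] .
    have phiI: "inj_on \<phi> V" using phi unfolding automorphism_def bij_betw_def by blast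
    have isoIso: "\<phi> x \<in> Iso" if "x \<in> Iso" for x
    proof -
      have xV: "x \<in> V" using that unfolding Iso_def by blast
      have "\<not> E (\<phi> x) z" for z
      proof
        assume e: "E (\<phi> x) z"
        then have "z \<in> V" using E_V by blast
        then obtain z' where z': "z' \<in> V" "\<phi> z' = z" using aut_surj[OF phi] by blast
        then have "E x z'" using phiE[OF xV z'(1)] e by simp
        then show False using that Iso_noE by blast
      qed
      then show ?thesis unfolding Iso_def using phiV[OF xV] by blast
    qed
    have IsoV: "Iso \<subseteq> V" unfolding Iso_def by blast
    have fixIso: "\<forall>x\<in>Iso. \<phi> x = x"
      apply (rule fix_last[OF inj_on_subset[OF phiI IsoV], of i])
      using isoIso fQ unfolding Qset_def by auto
    have NTtw: "E (\<phi> x) u \<longleftrightarrow> E x u" if x: "x \<in> NT" for x u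
    proof -
      obtain x' where x': "x' \<noteq> x" "twins V E x x'" using x unfolding NT_def by blast
      have xV: "x \<in> V" "x' \<in> V" and tw: "\<forall>z. E x z \<longleftrightarrow> E x' z" using x' twins_iff by blast+
      have xVn: "x \<in> Vn" using x unfolding NT_def by blast
      have x'Vn: "x' \<in> Vn" using xVn tw xV unfolding Vn_def by blast
      have "Some (x, 0::nat) \<in> S \<or> Some (x', 0) \<in> S"
        using det_twin[OF S M_symall M_irrall, of "Some (x, 0)" "Some (x', 0)"] xV x'(1)
          tw_lift[OF xV tw] by auto
      then obtain z where z: "z \<in> Vn" "Some (z, 0) \<in> S" "\<forall>u. E x u \<longleftrightarrow> E z u" "z \<in> V"
        using xVn x'Vn tw xV by blast
      have "\<phi> z = z" using fQ z unfolding Qset_def by blast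
      show ?thesis
      proof (cases "u \<in> V")
        case False then show ?thesis using E_V by blast
      next
        case True
        then obtain u' where u': "u' \<in> V" "\<phi> u' = u" using aut_surj[OF phi] by blast
        have "E (\<phi> x) u \<longleftrightarrow> E x u'" using phiE[OF xV(1) u'(1)] u' by simp
        also have "\<dots> \<longleftrightarrow> E z u'" using z by blast
        also have "\<dots> \<longleftrightarrow> E (\<phi> z) u" using phiE[OF z(4) u'(1)] u' by simp
        also have "\<dots> \<longleftrightarrow> E x u" using \<open>\<phi> z = z\<close> z by simp
        finally show ?thesis .
      qed
    qed
    define \<chi> where "\<chi> s x = (if s = 0 \<or> x \<notin> NT then \<phi> x else x)" for s :: nat and x
    define \<Phi> where "\<Phi> v = map_option (\<lambda>(x, s). (\<chi> s x, s)) v" for v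
    have PhiS: "\<Phi> (Some (x, s)) = Some (\<chi> s x, s)" for x s unfolding \<Phi>_def by simp
    have PhiN: "\<Phi> None = None" unfolding \<Phi>_def by simp
    have chiV: "\<chi> s x \<in> V" if "x \<in> V" for s x
      unfolding \<chi>_def using phiV that by auto
    have chiE: "E (\<chi> s x) u \<longleftrightarrow> E (\<phi> x) u" for s x u
      unfolding \<chi>_def using NTtw by auto
    have chiEE: "E (\<chi> s x) (\<chi> r y) \<longleftrightarrow> E x y" if "x \<in> V" "y \<in> V" for s r x y
    proof -
      have "E (\<chi> s x) (\<chi> r y) \<longleftrightarrow> E (\<phi> x) (\<chi> r y)" using chiE by blast
      also have "\<dots> \<longleftrightarrow> E (\<chi> r y) (\<phi> x)" using E_sym by blast
      also have "\<dots> \<longleftrightarrow> E (\<phi> y) (\<phi> x)" using chiE by blast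
      also have "\<dots> \<longleftrightarrow> E y x" using phiE that by blast
      also have "\<dots> \<longleftrightarrow> E x y" using E_sym by blast
      finally show ?thesis .
    qed
    have NT_back: "y \<in> NT" if y: "y \<in> V" and phy: "\<phi> y \<in> NT" for y
    proof -
      obtain x' where x': "x' \<noteq> \<phi> y" "twins V E (\<phi> y) x'" using phy unfolding NT_def by blast
      have x'V: "x' \<in> V" and tw: "\<forall>z. E (\<phi> y) z \<longleftrightarrow> E x' z" using x' twins_iff by blast+
      obtain y' where y': "y' \<in> V" "\<phi> y' = x'" using aut_surj[OF phi x'V] by blast
      have yy: "y' \<noteq> y" using y' x' by blast
      have tw2: "\<forall>z. E y z \<longleftrightarrow> E y' z"
      proof
        fix z show "E y z \<longleftrightarrow> E y' z"
        proof (cases "z \<in> V")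
          case False then show ?thesis using E_V by blast
        next
          case True
          have "E y z \<longleftrightarrow> E (\<phi> y) (\<phi> z)" using phiE y True by blast
          also have "\<dots> \<longleftrightarrow> E x' (\<phi> z)" using tw by blast
          also have "\<dots> \<longleftrightarrow> E y' z" using phiE[OF y'(1) True] y' by simp
          finally show ?thesis .
        qed
      qed
      have "\<phi> y \<in> Vn" using phy unfolding NT_def by blast
      then obtain w where "E (\<phi> y) w" unfolding Vn_def by blast
      then have "w \<in> V" using E_V by blast
      then obtain w' where "w' \<in> V" "\<phi> w' = w" using aut_surj[OF phi] by blast
      then have "E y w'" using phiE y \<open>E (\<phi> y) w\<close> by blast
      then have "y \<in> Vn" unfolding Vn_def using y by blast
      moreover have "twins V E y y'" using twins_iff y y' tw2 by blast
      ultimately show ?thesis unfolding NT_def using yy by blast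
    qed
    have chi_inj: "x = y" if "x \<in> V" "y \<in> V" "\<chi> s x = \<chi> s y" for s x y
    proof (cases "s = 0 \<or> (x \<notin> NT \<and> y \<notin> NT)")
      case True
      then have "\<phi> x = \<phi> y" using that unfolding \<chi>_def by auto
      then show ?thesis using phiI that unfolding inj_on_def by blast
    next
      case False
      then have s0: "s \<noteq> 0" and "x \<in> NT \<or> y \<in> NT" by auto
      then consider "x \<in> NT" "y \<in> NT" | "x \<in> NT" "y \<notin> NT" | "x \<notin> NT" "y \<in> NT" by blast
      then show ?thesis
      proof cases
        case 1 then show ?thesis using that s0 unfolding \<chi>_def by simp
      next
        case 2
        then have "x = \<phi> y" using that s0 unfolding \<chi>_def by simp
        then have "y \<in> NT" using NT_back that 2 by blast
        then show ?thesis using 2 by blast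
      next
        case 3
        then have "y = \<phi> x" using that s0 unfolding \<chi>_def by simp
        then have "x \<in> NT" using NT_back that 3 by blast
        then show ?thesis using 3 by blast
      qed
    qed
    have PhiW: "\<Phi> v \<in> W" if "v \<in> W" for v
    proof (cases v)
      case None then show ?thesis using PhiN by simp
    next
      case (Some p) then obtain x s where "v = Some (x, s)" by (cases p) auto
      then show ?thesis using that PhiS chiV by auto
    qed
    have Phi_inj: "inj_on \<Phi> W"
    proof (rule inj_onI)
      fix u v assume uv: "u \<in> W" "v \<in> W" "\<Phi> u = \<Phi> v"
      show "u = v"
      proof (cases u v rule: opt2_cases)
        case 1 then show ?thesis by simp
      next
        case (2 x s) then show ?thesis using uv PhiS PhiN by simp
      next
        case (3 y r) then show ?thesis using uv PhiS PhiN by simp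
      next
        case (4 x s y r)
        then have "s = r" "\<chi> s x = \<chi> s y" using uv PhiS by auto
        moreover have "x \<in> V" "y \<in> V" using uv 4 by auto
        ultimately show ?thesis using chi_inj 4 by blast
      qed
    qed
    have Phi_edge: "M u v \<longleftrightarrow> M (\<Phi> u) (\<Phi> v)" if "u \<in> W" "v \<in> W" for u v
    proof (cases u v rule: opt2_cases)
      case 1 then show ?thesis using PhiN by simp
    next
      case (2 x s) then show ?thesis using that PhiS PhiN chiV by auto
    next
      case (3 y r) then show ?thesis using that PhiS PhiN chiV by auto
    next
      case (4 x s y r)
      moreover have "x \<in> V" "y \<in> V" using that 4 by auto
      ultimately show ?thesis using PhiS chiEE by simp
    qed
    have autPhi: "automorphism W M \<Phi>"
      unfolding automorphism_def using finite_inj_bij[OF finW _ Phi_inj] PhiW Phi_edge by blast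
    have PhifS: "\<forall>v\<in>S. \<Phi> v = v"
    proof
      fix v assume vS: "v \<in> S"
      show "\<Phi> v = v"
      proof (cases v)
        case None then show ?thesis using PhiN by simp
      next
        case (Some p) then obtain x s where vs: "v = Some (x, s)" by (cases p) auto
        have xs: "x \<in> V" "s \<le> t" using vS vs SW by auto
        have "\<chi> s x = x"
        proof (cases "x \<in> Iso")
          case True then show ?thesis using fixIso unfolding \<chi>_def by auto
        next
          case False
          then have xVn: "x \<in> Vn" using VnI_disj xs by blast
          show ?thesis
          proof (cases "s = 0")
            case True
            then have "x \<in> Qset S i" unfolding Qset_def using xVn vS vs by auto
            then show ?thesis using fQ unfolding \<chi>_def by auto
          next
            case False
            show ?thesis
            proof (cases "x \<in> NT")
              case True then show ?thesis using False unfolding \<chi>_def by auto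
            next
              case False2: False
              then have "x \<in> Qset S i" unfolding Qset_def using xVn vS vs xs False by auto
              then show ?thesis using fQ unfolding \<chi>_def by auto
            qed
          qed
        qed
        then show ?thesis using vs PhiS by simp
      qed
    qed
    have "\<forall>v\<in>W. \<Phi> v = v" using S autPhi PhifS unfolding determining_set_def by blast
    then have "\<forall>x\<in>V. \<phi> x = x"
    proof (intro ballI)
      fix x assume x: "x \<in> V" and h: "\<forall>v\<in>W. \<Phi> v = v"
      then have "\<Phi> (Some (x, 0)) = Some (x, 0)" by simp
      then show "\<phi> x = x" using PhiS unfolding \<chi>_def by simp
    qed
  }
  then show ?thesis unfolding determining_set_def using QV by blast
qed

end



context mg
begin

lemma card_Sup:
  assumes "finite D" "finite T" "i0 \<notin> T"
  shows "card (Sup D T i0) = card D + t * card T + (t - 1)"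
proof -
  define A1 where "A1 = (\<lambda>x. Some (x, 0::nat)) ` D"
  define A2 where "A2 = (\<lambda>p. Some p) ` (T \<times> {1..t})"
  define A3 where "A3 = (\<lambda>s. Some (i0, s)) ` {1..<t}"
  have c1: "card A1 = card D" unfolding A1_def by (rule card_image) (auto simp: inj_on_def)
  have c2: "card A2 = t * card T" unfolding A2_def
    by (subst card_image) (auto simp: inj_on_def card_cartesian_product)
  have c3: "card A3 = t - 1" unfolding A3_def by (subst card_image) (auto simp: inj_on_def)
  have f: "finite A1" "finite A2" "finite A3" unfolding A1_def A2_def A3_def using assms by auto
  have d1: "A1 \<inter> A2 = {}" unfolding A1_def A2_def by auto
  have d2: "(A1 \<union> A2) \<inter> A3 = {}" unfolding A1_def A2_def A3_def using assms(3) by auto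
  have "Sup D T i0 = A1 \<union> A2 \<union> A3" unfolding Sup_def A1_def A2_def A3_def by blast
  then have "card (Sup D T i0) = card (A1 \<union> A2) + card A3" using card_Un_disjoint[OF _ f(3) d2] f by simp
  also have "\<dots> = card A1 + card A2 + card A3" using card_Un_disjoint[OF f(1) f(2) d1] by simp
  finally show ?thesis using c1 c2 c3 by simp
qed

lemma min_tc_iso:
  assumes mtc: "min_twin_cover V E T" and i: "i \<in> Iso"
  shows "\<exists>j\<in>Iso. j \<notin> T"
proof (rule ccontr)
  assume "\<not> (\<exists>j\<in>Iso. j \<notin> T)"
  then have IT: "Iso \<subseteq> T" by blast
  have tc: "twin_cover V E T" using mtc unfolding min_twin_cover_def by blast
  have TV: "T \<subseteq> V" using tc unfolding twin_cover_def by blast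
  have finT: "finite T" using finite_subset[OF TV finV] .
  have "twin_cover V E (T - {i})"
    unfolding twin_cover_def
  proof (intro conjI allI impI)
    show "T - {i} \<subseteq> V" using TV by blast
    fix x y assume xy: "twins V E x y \<and> x \<noteq> y"
    then have "x \<in> T \<or> y \<in> T" using tc unfolding twin_cover_def by blast
    moreover have "x = i \<Longrightarrow> y \<in> Iso" using xy i twins_iff unfolding Iso_def by blast
    moreover have "y = i \<Longrightarrow> x \<in> Iso" using xy i twins_iff unfolding Iso_def by blast
    ultimately show "x \<in> T - {i} \<or> y \<in> T - {i}" using IT xy by blast
  qed
  then have "card T \<le> card (T - {i})" using mtc unfolding min_twin_cover_def by blast
  moreover have "card (T - {i}) < card T" using finT i IT by (meson card_Diff1_less subsetD)
  ultimately show False by simp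
qed

lemma card_le1: "finite A \<Longrightarrow> \<forall>x\<in>A. \<forall>y\<in>A. x = y \<Longrightarrow> card A \<le> 1"
  using card_le_Suc0_iff_eq by fastforce

lemma lower:
  assumes S: "determining_set W M S" and mtc: "min_twin_cover V E T" and i: "i \<in> Iso"
  shows "t * card T + det_num V E + t - 1 \<le> card S"
proof -
  have SW: "S \<subseteq> W" using S unfolding determining_set_def by blast
  have finS: "finite S" using finite_subset[OF SW finW] .
  have tc: "twin_cover V E T" using mtc unfolding min_twin_cover_def by blast
  have TV: "T \<subseteq> V" using tc unfolding twin_cover_def by blast
  have finT: "finite T" using finite_subset[OF TV finV] .
  have IsoV: "Iso \<subseteq> V" unfolding Iso_def by blast
  have finI: "finite Iso" using finite_subset[OF IsoV finV] .
  have NTVn: "NT \<subseteq> Vn" unfolding NT_def by blast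
  have VnV: "Vn \<subseteq> V" unfolding Vn_def by blast
  define fstt :: "('a \<times> nat) option \<Rightarrow> 'a" where "fstt v = fst (the v)" for v
  define A0 where "A0 = {v\<in>S. \<exists>x. v = Some (x, 0) \<and> x \<in> Vn}"
  define AJ where "AJ = {v\<in>S. \<exists>x s. v = Some (x, s) \<and> x \<in> Iso \<and> s < t}"
  define AP where "AP = {v\<in>S. \<exists>x. v = Some (x, t) \<and> x \<in> Iso}"
  define AN where "AN s = {v\<in>S. \<exists>x. v = Some (x, s) \<and> x \<in> NT}" for s
  define ANa where "ANa = (\<Union>s\<in>{1..t}. AN s)"
  define AS where "AS = {v\<in>S. \<exists>x s. v = Some (x, s) \<and> x \<in> Vn - NT \<and> 1 \<le> s \<and> s \<le> t}"
  have fins: "finite A0" "finite AJ" "finite AP" "finite ANa" "finite AS" "\<And>s. finite (AN s)"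
    unfolding A0_def AJ_def AP_def ANa_def AN_def AS_def using finS by auto
  have dj1: "A0 \<inter> AJ = {}" unfolding A0_def AJ_def using Vn_Iso by auto
  have dj2: "(A0 \<union> AJ) \<inter> AP = {}" unfolding A0_def AJ_def AP_def using Vn_Iso by auto
  have dj3: "(A0 \<union> AJ \<union> AP) \<inter> ANa = {}" unfolding A0_def AJ_def AP_def ANa_def AN_def
    using Vn_Iso NTVn by auto
  have dj4: "(A0 \<union> AJ \<union> AP \<union> ANa) \<inter> AS = {}" unfolding A0_def AJ_def AP_def ANa_def AN_def AS_def
    using Vn_Iso NTVn by auto
  have sub: "A0 \<union> AJ \<union> AP \<union> ANa \<union> AS \<subseteq> S" unfolding A0_def AJ_def AP_def ANa_def AN_def AS_def
    by auto
  have h1: "card A0 + card AJ + card AP + card ANa + card AS \<le> card S"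
  proof -
    have "card (A0 \<union> AJ \<union> AP \<union> ANa \<union> AS) = card A0 + card AJ + card AP + card ANa + card AS"
      using card_Un_disjoint[OF _ _ dj4] card_Un_disjoint[OF _ _ dj3] card_Un_disjoint[OF _ _ dj2]
        card_Un_disjoint[OF _ _ dj1] fins by simp
    then show ?thesis using card_mono[OF finS sub] by simp
  qed
  have h2: "det_num V E \<le> card A0 + card AS + (card Iso - 1)"
  proof -
    have dq: "det_num V E \<le> card (Qset S i)"
      unfolding det_num_def by (rule Least_le) (use lower_Q[OF S i] in blast)
    have "Qset S i \<subseteq> fstt ` A0 \<union> fstt ` AS \<union> (Iso - {i})"
    proof
      fix x assume "x \<in> Qset S i"
      then consider "x \<in> Vn" "Some (x, 0) \<in> S" | s where "x \<in> Vn - NT" "1 \<le> s" "s \<le> t" "Some (x, s) \<in> S"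
        | "x \<in> Iso - {i}" unfolding Qset_def by blast
      then show "x \<in> fstt ` A0 \<union> fstt ` AS \<union> (Iso - {i})"
      proof cases
        case 1 then have "Some (x, 0) \<in> A0" unfolding A0_def by blast
        then have "fstt (Some (x, 0)) \<in> fstt ` A0" by blast
        then show ?thesis unfolding fstt_def by simp
      next
        case (2 s) then have "Some (x, s) \<in> AS" unfolding AS_def by blast
        then have "fstt (Some (x, s)) \<in> fstt ` AS" by blast
        then show ?thesis unfolding fstt_def by simp
      next
        case 3 then show ?thesis by blast
      qed
    qed
    then have "card (Qset S i) \<le> card (fstt ` A0 \<union> fstt ` AS \<union> (Iso - {i}))"
      using fins finI by (intro card_mono) auto
    also have "\<dots> \<le> card (fstt ` A0) + card (fstt ` AS) + card (Iso - {i})"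
      by (meson add_le_mono card_Un_le le_refl order_trans)
    also have "\<dots> \<le> card A0 + card AS + (card Iso - 1)"
      using card_image_le[OF fins(1), of fstt] card_image_le[OF fins(5), of fstt] card_Diff_singleton[OF i]
      by simp
    finally show ?thesis using dq by linarith
  qed
  have h3: "card Iso * t \<le> card AJ + 1"
  proof -
    define J where "J = (\<lambda>p. Some p) ` (Iso \<times> {..<t})"
    have cJ: "card J = card Iso * t" unfolding J_def
      by (subst card_image) (auto simp: inj_on_def card_cartesian_product)
    have finJ: "finite J" unfolding J_def using finI by auto
    have "J \<inter> S = AJ" unfolding J_def AJ_def by auto
    moreover have "card (J - S) \<le> 1"
    proof (rule card_le1)
      show "finite (J - S)" using finJ by simp
      show "\<forall>u\<in>J - S. \<forall>v\<in>J - S. u = v"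
      proof (intro ballI)
        fix u v assume uv: "u \<in> J - S" "v \<in> J - S"
        then obtain x s y r where xs: "u = Some (x, s)" "x \<in> Iso" "s < t" "v = Some (y, r)" "y \<in> Iso" "r < t"
          unfolding J_def by auto
        have "u \<in> W" "v \<in> W" using xs IsoV by auto
        moreover have "\<forall>z\<in>W. M u z \<longleftrightarrow> M v z" using J_noedge xs by blast
        ultimately show "u = v" using det_twin[OF S M_symall M_irrall] uv by blast
      qed
    qed
    moreover have "card J \<le> card (J \<inter> S) + card (J - S)"
      by (metis Int_Diff_Un card_Un_le)
    ultimately have "card J \<le> card AJ + 1" by simp
    then show ?thesis using cJ by simp
  qed
  have h4: "card Iso \<le> card AP + 1"
  proof -
    define P where "P = (\<lambda>x. Some (x, t)) ` Iso"
    have cP: "card P = card Iso" unfolding P_def by (subst card_image) (auto simp: inj_on_def)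
    have finP: "finite P" unfolding P_def using finI by auto
    have "P \<inter> S = AP" unfolding P_def AP_def by auto
    moreover have "card (P - S) \<le> 1"
    proof (rule card_le1)
      show "finite (P - S)" using finP by simp
      show "\<forall>u\<in>P - S. \<forall>v\<in>P - S. u = v"
      proof (intro ballI)
        fix u v assume uv: "u \<in> P - S" "v \<in> P - S"
        then obtain x y where xs: "u = Some (x, t)" "x \<in> Iso" "v = Some (y, t)" "y \<in> Iso"
          unfolding P_def by auto
        have "u \<in> W" "v \<in> W" using xs IsoV by auto
        moreover have "\<forall>z\<in>W. M u z \<longleftrightarrow> M v z" using P_edge xs by blast
        ultimately show "u = v" using det_twin[OF S M_symall M_irrall] uv by blast
      qed
    qed
    moreover have "card P \<le> card (P \<inter> S) + card (P - S)"
      by (metis Int_Diff_Un card_Un_le)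
    ultimately have "card P \<le> card AP + 1" by simp
    then show ?thesis using cP by simp
  qed
  have hs: "card T \<le> card (AN s) + card (T \<inter> Iso)" if s: "1 \<le> s" "s \<le> t" for s
  proof -
    define X where "X = {x\<in>NT. Some (x, s) \<in> S} \<union> (T \<inter> Iso)"
    have "twin_cover V E X"
      unfolding twin_cover_def
    proof (intro conjI allI impI)
      show "X \<subseteq> V" unfolding X_def using NTVn VnV IsoV by blast
      fix x y assume xy: "twins V E x y \<and> x \<noteq> y"
      have xyV: "x \<in> V" "y \<in> V" and tw: "\<forall>z. E x z \<longleftrightarrow> E y z" using xy twins_iff by blast+
      show "x \<in> X \<or> y \<in> X"
      proof (cases "x \<in> Iso")
        case True
        then have "y \<in> Iso" using tw xyV unfolding Iso_def by blast
        moreover have "x \<in> T \<or> y \<in> T" using tc xy unfolding twin_cover_def by blast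
        ultimately show ?thesis using True unfolding X_def by blast
      next
        case False
        then have xVn: "x \<in> Vn" using VnI_disj xyV by blast
        then have yVn: "y \<in> Vn" using tw xyV unfolding Vn_def by blast
        have xNT: "x \<in> NT" using xVn xy unfolding NT_def by auto
        have "twins V E y x" using xy twins_iff by blast
        then have yNT: "y \<in> NT" using yVn xy unfolding NT_def by auto
        have "Some (x, s) \<in> S \<or> Some (y, s) \<in> S"
          using det_twin[OF S M_symall M_irrall, of "Some (x, s)" "Some (y, s)"] xyV xy s
            tw_lift[OF xyV tw] by auto
        then show ?thesis unfolding X_def using xNT yNT by blast
      qed
    qed
    then have "card T \<le> card X" using mtc unfolding min_twin_cover_def by blast
    also have "\<dots> \<le> card {x\<in>NT. Some (x, s) \<in> S} + card (T \<inter> Iso)" unfolding X_def by (rule card_Un_le)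
    also have "card {x\<in>NT. Some (x, s) \<in> S} \<le> card (AN s)"
    proof -
      have "{x\<in>NT. Some (x, s) \<in> S} \<subseteq> fstt ` AN s"
      proof
        fix x assume "x \<in> {x\<in>NT. Some (x, s) \<in> S}"
        then have "Some (x, s) \<in> AN s" unfolding AN_def by blast
        then have "fstt (Some (x, s)) \<in> fstt ` AN s" by blast
        then show "x \<in> fstt ` AN s" unfolding fstt_def by simp
      qed
      then show ?thesis using card_image_le[OF fins(6)] card_mono[OF finite_imageI[OF fins(6)]] by (meson order_trans)
    qed
    finally show ?thesis by simp
  qed
  have h5: "t * card T \<le> card ANa + t * card (T \<inter> Iso)"
  proof -
    have "card ANa = (\<Sum>s\<in>{1..t}. card (AN s))"
      unfolding ANa_def by (rule card_UN_disjoint) (use fins(6) in \<open>auto simp: AN_def\<close>)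
    moreover have "(\<Sum>s\<in>{1..t}. card T) \<le> (\<Sum>s\<in>{1..t}. card (AN s) + card (T \<inter> Iso))"
      by (rule sum_mono) (use hs in auto)
    moreover have "(\<Sum>s\<in>{1..t}. card (AN s) + card (T \<inter> Iso)) = (\<Sum>s\<in>{1..t}. card (AN s)) + t * card (T \<inter> Iso)"
      by (simp add: sum.distrib)
    ultimately show ?thesis by simp
  qed
  have h6: "card (T \<inter> Iso) + 1 \<le> card Iso"
  proof -
    obtain j where j: "j \<in> Iso" "j \<notin> T" using min_tc_iso[OF mtc i] by blast
    have "T \<inter> Iso \<subseteq> Iso - {j}" using j by blast
    then have "card (T \<inter> Iso) \<le> card (Iso - {j})" using finI by (intro card_mono) auto
    moreover have "card (Iso - {j}) = card Iso - 1" using card_Diff_singleton[OF j(1)] .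
    moreover have "card Iso \<ge> 1" using finI j(1) by (metis One_nat_def Suc_leI card_gt_0_iff empty_iff)
    ultimately show ?thesis by linarith
  qed
  have h7: "t * card (T \<inter> Iso) + t \<le> card Iso * t"
    using mult_le_mono2[OF h6, of t] by (simp add: algebra_simps)
  have kpos: "card Iso \<ge> 1" using h6 by simp
  show ?thesis using h1 h2 h3 h4 h5 h7 kpos t1 by linarith
qed

end




lemma det_self: "determining_set V E V"
  unfolding determining_set_def by blast

lemma det_num_ex: "\<exists>D. determining_set V E D \<and> card D = det_num V E"
proof -
  have "\<exists>n S. determining_set V E S \<and> card S = n" using det_self by blast
  then show ?thesis unfolding det_num_def by (rule LeastI_ex)
qed

lemma det_num_le: "determining_set V E D \<Longrightarrow> det_num V E \<le> card D"
  unfolding det_num_def by (rule Least_le) blast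

theorem mainTheorem6:
  fixes V :: "'a set" and E :: "'a \<Rightarrow> 'a \<Rightarrow> bool" and T :: "'a set" and t :: nat
  assumes "simple_graph V E"
    and "\<exists>x y. x \<noteq> y \<and> twins V E x y"
    and "\<exists>x. isolated V E x"
    and "min_twin_cover V E T"
    and "t \<ge> 1"
  shows "det_num (myc_verts V t) (myc_edge E V t) = t * card T + det_num V E + t - 1"
proof -
  interpret mg V E t using assms(1) assms(5) by unfold_locales
  obtain a b where ab: "a \<noteq> b" "twins V E a b" using assms(2) by blast
  have abV: "a \<in> V" "b \<in> V" using ab twins_iff by blast+
  obtain i where i: "i \<in> Iso" using assms(3) isolated_Iso by blast
  have tc: "twin_cover V E T" using assms(4) unfolding min_twin_cover_def by blast
  have TV: "T \<subseteq> V" using tc unfolding twin_cover_def by blast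
  obtain i0 where i0: "i0 \<in> Iso" "i0 \<notin> T" using min_tc_iso[OF assms(4) i] by blast
  obtain D where D: "determining_set V E D" "card D = det_num V E" using det_num_ex by blast
  have DV: "D \<subseteq> V" using D unfolding determining_set_def by blast
  have up: "det_num W M \<le> card D + t * card T + (t - 1)"
    using det_num_le[OF upper_det[OF tc i0 abV ab(1) D(1)]]
      card_Sup[OF finite_subset[OF DV finV] finite_subset[OF TV finV] i0(2)] by simp
  obtain S where S: "determining_set W M S" "card S = det_num W M" using det_num_ex by blast
  have lo: "t * card T + det_num V E + t - 1 \<le> det_num W M"
    using lower[OF S(1) assms(4) i] S(2) by simp
  show ?thesis using up lo D(2) assms(5) by linarith
qed



end
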